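(* Let $\phi_1,\dots,\phi_B\in\mathbb R^d$ with $\|\phi_i\|_2\le1$, and let $\eta>0$ with $\eta B<\frac13$. Let $H:=(I-\eta\phi_1\phi_1^\top)(I-\eta\phi_2\phi_2^\top)\cdots(I-\eta\phi_B\phi_B^\top)$. Then, in the positive semidefinite order, $$I-2\eta\Big(1+\frac{\eta B}{1-2\eta B}\Big)\sum_{i=1}^B\phi_i\phi_i^\top\;\preceq\;H^\top H\;\preceq\;I-2\eta\Big(1-\frac{\eta B}{1-2\eta B}\Big)\sum_{i=1}^B\phi_i\phi_i^\top .$$ *)

theory Defs
  imports "HOL-Analysis.Analysis"
begin

definition outer :: "real^'d \<Rightarrow> real^'d \<Rightarrow> real^'d^'d" where
  "outer u v = (\<chi> i j. u $ i * v $ j)"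

fun mat_prod_upto :: "(nat \<Rightarrow> real^'d^'d) \<Rightarrow> nat \<Rightarrow> real^'d^'d" where
  "mat_prod_upto M 0 = mat 1"
| "mat_prod_upto M (Suc n) = mat_prod_upto M n ** M (Suc n)"

definition loewner_le :: "real^'d^'d \<Rightarrow> real^'d^'d \<Rightarrow> bool" where
  "loewner_le A C \<longleftrightarrow> (\<forall>x. x \<bullet> ((C - A) *v x) \<ge> 0)"

end

theory Submission
  imports Defs
begin

lemma outer_mv: "outer u v *v x = (v \<bullet> x) *\<^sub>R u"
  by (simp add: outer_def matrix_vector_mult_def inner_vec_def vec_eq_iff sum_distrib_left mult_ac)

lemma sum_mv: "(\<Sum>i\<in>A. M i) *v (x::real^'n) = (\<Sum>i\<in>A. M i *v x)"
  by (induction A rule: infinite_finite_induct) (auto simp: matrix_vector_mult_add_rdistrib)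

lemma quad_tt: "x \<bullet> ((transpose (H::real^'n^'m) ** H) *v x) = (norm (H *v x))^2"
  unfolding power2_norm_eq_inner matrix_vector_mul_assoc[symmetric] transpose_matrix_vector
  by (subst inner_commute) (rule dot_lmul_matrix)

lemma smult_mv: "((c::real) *\<^sub>R (A::real^'n^'m)) *v x = c *\<^sub>R (A *v x)"
  by (simp add: matrix_vector_mult_def vec_eq_iff sum_distrib_left mult.assoc vector_scaleR_component real_scaleR_def)

definition PP :: "(nat \<Rightarrow> real^'d) \<Rightarrow> real \<Rightarrow> nat \<Rightarrow> real^'d^'d" where
  "PP \<phi> \<eta> i = mat 1 - \<eta> *\<^sub>R outer (\<phi> i) (\<phi> i)"

lemma PP_mv: "PP \<phi> \<eta> i *v y = y - (\<eta> * (\<phi> i \<bullet> y)) *\<^sub>R \<phi> i"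
  unfolding PP_def matrix_vector_mult_diff_rdistrib smult_mv outer_mv by simp

lemma HA: "mat_prod_upto (PP \<phi> \<eta>) n *v y
   = y - \<eta> *\<^sub>R (\<Sum>k=1..n. (\<phi> k \<bullet> y) *\<^sub>R (mat_prod_upto (PP \<phi> \<eta>) (k-1) *v \<phi> k))"
proof (induction n arbitrary: y)
  case 0
  then show ?case by simp
next
  case (Suc n)
  have "mat_prod_upto (PP \<phi> \<eta>) (Suc n) *v y
      = mat_prod_upto (PP \<phi> \<eta>) n *v (PP \<phi> \<eta> (Suc n) *v y)"
    by (simp add: matrix_vector_mul_assoc)
  also have "\<dots> = mat_prod_upto (PP \<phi> \<eta>) n *v y
      - (\<eta> * (\<phi> (Suc n) \<bullet> y)) *\<^sub>R (mat_prod_upto (PP \<phi> \<eta>) n *v \<phi> (Suc n))"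
    by (simp only: PP_mv matrix_vector_mult_diff_distrib matrix_vector_mult_scaleR)
  also have "\<dots> = y - \<eta> *\<^sub>R (\<Sum>k=1..n. (\<phi> k \<bullet> y) *\<^sub>R (mat_prod_upto (PP \<phi> \<eta>) (k-1) *v \<phi> k))
      - \<eta> *\<^sub>R ((\<phi> (Suc n) \<bullet> y) *\<^sub>R (mat_prod_upto (PP \<phi> \<eta>) n *v \<phi> (Suc n)))"
    by (simp only: Suc.IH scaleR_scaleR)
  also have "\<dots> = y - \<eta> *\<^sub>R (\<Sum>k=1..Suc n. (\<phi> k \<bullet> y) *\<^sub>R (mat_prod_upto (PP \<phi> \<eta>) (k-1) *v \<phi> k))"
    by (simp add: scaleR_add_right diff_diff_eq)
  finally show ?case .
qed

lemma PP_contract: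
  assumes "norm (\<phi> i) \<le> 1" "0 \<le> \<eta>" "\<eta> \<le> 1"
  shows "norm (PP \<phi> \<eta> i *v y) \<le> norm y"
proof -
  define a where "a = \<phi> i \<bullet> y"
  have "(norm (PP \<phi> \<eta> i *v y))^2 = (norm y)^2 - \<eta> * a^2 * (2 - \<eta> * (norm (\<phi> i))^2)"
    unfolding PP_mv power2_norm_eq_inner a_def
    by (simp add: inner_diff_left inner_diff_right inner_commute algebra_simps power2_eq_square)
  moreover have "(norm (\<phi> i))^2 \<le> 1" using assms(1) by (simp add: power_le_one)
  moreover have "\<eta> * (norm (\<phi> i))^2 \<le> 1"
    using assms calculation(2) by (simp add: mult_le_one)
  moreover have "0 \<le> \<eta> * a^2 * (2 - \<eta> * (norm (\<phi> i))^2)"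
    using assms calculation(3) by (intro mult_nonneg_nonneg) auto
  ultimately have "(norm (PP \<phi> \<eta> i *v y))^2 \<le> (norm y)^2" by linarith
  then show ?thesis by (rule power2_le_imp_le) simp
qed

lemma H_contract:
  assumes "\<And>i. i \<in> {1..n} \<Longrightarrow> norm (\<phi> i) \<le> 1" "0 \<le> \<eta>" "\<eta> \<le> 1"
  shows "norm (mat_prod_upto (PP \<phi> \<eta>) n *v y) \<le> norm y"
  using assms
proof (induction n arbitrary: y)
  case 0
  then show ?case by simp
next
  case (Suc n)
  have "norm (mat_prod_upto (PP \<phi> \<eta>) (Suc n) *v y)
      = norm (mat_prod_upto (PP \<phi> \<eta>) n *v (PP \<phi> \<eta> (Suc n) *v y))"
    by (simp add: matrix_vector_mul_assoc)
  also have "\<dots> \<le> norm (PP \<phi> \<eta> (Suc n) *v y)"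
    using Suc.prems by (intro Suc.IH) auto
  also have "\<dots> \<le> norm y"
    using Suc.prems by (intro PP_contract) auto
  finally show ?case .
qed


lemma main_bound:
  fixes \<phi> :: "nat \<Rightarrow> real^'d" and \<eta> :: real and B :: nat and x :: "real^'d"
  assumes phi: "\<And>i. i \<in> {1..B} \<Longrightarrow> norm (\<phi> i) \<le> 1"
    and eta: "\<eta> > 0" and tB: "\<eta> * real B < 1/3" and B1: "B \<ge> 1"
  defines "t \<equiv> \<eta> * real B"
  shows "\<bar>(norm (mat_prod_upto (PP \<phi> \<eta>) B *v x))^2 - (norm x)^2 + 2*\<eta>*(\<Sum>k=1..B. (\<phi> k \<bullet> x)^2)\<bar>
          \<le> 2*\<eta>*(t/(1-2*t))*(\<Sum>k=1..B. (\<phi> k \<bullet> x)^2)"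
proof -
  define H where "H = mat_prod_upto (PP \<phi> \<eta>) B"
  define b where "b k = \<phi> k \<bullet> x" for k
  define u where "u k = mat_prod_upto (PP \<phi> \<eta>) (k-1) *v \<phi> k" for k
  define cc where "cc k = x \<bullet> u k" for k
  define e where "e k = b k - cc k" for k
  define g where "g i k = \<phi> i \<bullet> \<phi> k" for i k
  define Bs where "Bs = (\<Sum>k=1..B. \<bar>b k\<bar>)"
  define s where "s = (\<Sum>k=1..B. (b k)^2)"
  define E where "E = \<eta> * Bs / (1-t)"
  have t13: "t < 1/3" "0 < t" using tB eta B1 by (auto simp: t_def)
  have eta1: "\<eta> \<le> t" using eta B1 by (simp add: t_def)
  have Bs0: "0 \<le> Bs" unfolding Bs_def by (simp add: sum_nonneg)
  have s0: "0 \<le> s" unfolding s_def by (simp add: sum_nonneg)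
  have E0: "0 \<le> E" unfolding E_def using Bs0 eta t13 by simp
  have u_rec: "u k = \<phi> k - \<eta> *\<^sub>R (\<Sum>i=1..k-1. g i k *\<^sub>R u i)" for k
    unfolding u_def g_def by (rule HA)
  have cc_rec: "cc k = b k - \<eta> * (\<Sum>i=1..k-1. g i k * cc i)" for k
  proof -
    have "cc k = x \<bullet> (\<phi> k - \<eta> *\<^sub>R (\<Sum>i=1..k-1. g i k *\<^sub>R u i))"
      using u_rec[of k] by (simp add: cc_def)
    then show ?thesis
      by (simp add: inner_diff_right inner_sum_right b_def inner_commute cc_def)
  qed
  have e_rec: "e k = \<eta> * (\<Sum>i=1..k-1. g i k * cc i)" for k
    using cc_rec[of k] by (simp add: e_def)
  have gle: "\<bar>g i k\<bar> \<le> 1" if "i \<in> {1..B}" "k \<in> {1..B}" for i k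
  proof -
    have "\<bar>g i k\<bar> \<le> norm (\<phi> i) * norm (\<phi> k)"
      unfolding g_def by (rule Cauchy_Schwarz_ineq2)
    also have "\<dots> \<le> 1" using phi that by (simp add: mult_le_one)
    finally show ?thesis .
  qed
  have ebound: "k \<le> B \<Longrightarrow> \<bar>e k\<bar> \<le> E" for k
  proof (induction k rule: less_induct)
    case (less k)
    have "\<bar>e k\<bar> = \<eta> * \<bar>\<Sum>i=1..k-1. g i k * cc i\<bar>"
      using e_rec[of k] eta by (simp add: abs_mult)
    also have "\<bar>\<Sum>i=1..k-1. g i k * cc i\<bar> \<le> (\<Sum>i=1..k-1. \<bar>b i\<bar> + E)"
    proof -
      have "\<bar>\<Sum>i=1..k-1. g i k * cc i\<bar> \<le> (\<Sum>i=1..k-1. \<bar>g i k * cc i\<bar>)"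
        by (rule sum_abs)
      also have "\<dots> \<le> (\<Sum>i=1..k-1. \<bar>b i\<bar> + E)"
      proof (rule sum_mono)
        fix i assume i: "i \<in> {1..k-1}"
        then have ik: "i \<in> {1..B}" "k \<in> {1..B}" using less.prems by auto
        have "\<bar>g i k * cc i\<bar> \<le> \<bar>cc i\<bar>"
          using gle[OF ik] by (simp add: abs_mult mult_left_le_one_le)
        also have "\<dots> \<le> \<bar>b i\<bar> + \<bar>e i\<bar>" by (simp add: e_def)
        also have "\<bar>e i\<bar> \<le> E" using less.IH[of i] i less.prems by auto
        finally show "\<bar>g i k * cc i\<bar> \<le> \<bar>b i\<bar> + E" by simp
      qed
      finally show ?thesis .
    qed
    also have "(\<Sum>i=1..k-1. \<bar>b i\<bar> + E) \<le> Bs + real B * E"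
    proof -
      have "(\<Sum>i=1..k-1. \<bar>b i\<bar>) \<le> Bs"
        unfolding Bs_def using less.prems by (intro sum_mono2) auto
      moreover have "(\<Sum>i=1..k-1. E) \<le> real B * E"
        using less.prems E0 by (simp add: mult_right_mono)
      ultimately show ?thesis by (simp add: sum.distrib)
    qed
    finally have "\<bar>e k\<bar> \<le> \<eta> * (Bs + real B * E)" using eta by (simp add: mult_left_mono)
    also have "\<eta> * (Bs + real B * E) = E"
      using t13 unfolding E_def t_def by (simp add: field_simps)
    finally show ?case .
  qed
  define q where "q = (\<Sum>k=1..B. b k *\<^sub>R u k)"
  have Hx: "H *v x = x - \<eta> *\<^sub>R q"
    using HA[of \<phi> \<eta> B x] by (simp add: H_def q_def b_def u_def)
  have xq: "x \<bullet> q = (\<Sum>k=1..B. b k * cc k)"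
    by (simp add: q_def inner_sum_right cc_def)
  have nHx: "(norm (H *v x))^2 = (norm x)^2 - 2*\<eta>*(\<Sum>k=1..B. b k * cc k) + \<eta>^2 * (norm q)^2"
    unfolding Hx power2_norm_eq_inner xq[symmetric]
    by (simp add: inner_diff_left inner_diff_right inner_commute algebra_simps power2_eq_square)
  define w where "w n = (\<Sum>k=1..n. b k *\<^sub>R \<phi> k)" for n
  define F where "F n = (\<Sum>k=1..n. (b k)^2 * (norm (\<phi> k))^2)" for n
  define T where "T n = (\<Sum>k=1..n. b k * (\<phi> k \<bullet> w (k-1)))" for n
  have wid: "(norm (w n))^2 = 2 * T n + F n" for n
  proof (induction n)
    case 0
    then show ?case by (simp add: w_def T_def F_def)
  next
    case (Suc n)
    have ws: "w (Suc n) = w n + b (Suc n) *\<^sub>R \<phi> (Suc n)" by (simp add: w_def)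
    have "(norm (w (Suc n)))^2 = (norm (w n))^2 + 2 * (b (Suc n) * (\<phi> (Suc n) \<bullet> w n))
          + (b (Suc n))^2 * (norm (\<phi> (Suc n)))^2"
      unfolding ws power2_norm_eq_inner
      by (simp add: inner_add_left inner_add_right inner_commute algebra_simps power2_eq_square)
    then show ?case using Suc.IH by (simp add: T_def F_def)
  qed
  have pw: "\<phi> k \<bullet> w (k-1) = (\<Sum>i=1..k-1. g i k * b i)" for k
    by (simp add: w_def inner_sum_right g_def inner_commute mult.commute)
  define R where "R = (\<Sum>k=1..B. b k * (\<Sum>i=1..k-1. g i k * e i))"
  have sbe: "(\<Sum>k=1..B. b k * e k) = \<eta> * T B - \<eta> * R"
  proof -
    have "b k * e k = \<eta> * (b k * (\<phi> k \<bullet> w (k-1))) - \<eta> * (b k * (\<Sum>i=1..k-1. g i k * e i))" for k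
    proof -
      have "(\<Sum>i=1..k-1. g i k * cc i) = (\<Sum>i=1..k-1. g i k * b i) - (\<Sum>i=1..k-1. g i k * e i)"
        by (simp add: e_def algebra_simps sum_subtractf)
      then have ek: "e k = \<eta> * ((\<Sum>i=1..k-1. g i k * b i) - (\<Sum>i=1..k-1. g i k * e i))"
        using e_rec[of k] by simp
      show ?thesis unfolding ek pw by (simp add: algebra_simps)
    qed
    then show ?thesis
      by (simp add: T_def R_def sum_subtractf sum_distrib_left)
  qed
  have Rb: "\<bar>R\<bar> \<le> Bs * (real B * E)"
  proof -
    have "\<bar>R\<bar> \<le> (\<Sum>k=1..B. \<bar>b k * (\<Sum>i=1..k-1. g i k * e i)\<bar>)"
      unfolding R_def by (rule sum_abs)
    also have "\<dots> \<le> (\<Sum>k=1..B. \<bar>b k\<bar> * (real B * E))"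
    proof (rule sum_mono)
      fix k assume k: "k \<in> {1..B}"
      have "\<bar>\<Sum>i=1..k-1. g i k * e i\<bar> \<le> (\<Sum>i=1..k-1. \<bar>g i k * e i\<bar>)" by (rule sum_abs)
      also have "\<dots> \<le> (\<Sum>i=1..k-1. E)"
      proof (rule sum_mono)
        fix i assume i: "i \<in> {1..k-1}"
        then have ik: "i \<in> {1..B}" "k \<in> {1..B}" using k by auto
        have "\<bar>g i k * e i\<bar> \<le> \<bar>e i\<bar>"
          using gle[OF ik] by (simp add: abs_mult mult_left_le_one_le)
        also have "\<dots> \<le> E" using ebound[of i] ik by auto
        finally show "\<bar>g i k * e i\<bar> \<le> E" .
      qed
      also have "\<dots> \<le> real B * E" using k E0 by (simp add: mult_right_mono)
      finally show "\<bar>b k * (\<Sum>i=1..k-1. g i k * e i)\<bar> \<le> \<bar>b k\<bar> * (real B * E)"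
        by (simp add: abs_mult mult_left_mono)
    qed
    also have "\<dots> = Bs * (real B * E)" by (simp add: Bs_def sum_distrib_right)
    finally show ?thesis .
  qed
  have wn: "norm (w B) \<le> Bs"
  proof -
    have "norm (w B) \<le> (\<Sum>k=1..B. norm (b k *\<^sub>R \<phi> k))" unfolding w_def by (rule norm_sum)
    also have "\<dots> \<le> Bs" unfolding Bs_def
    proof (rule sum_mono)
      fix k assume "k \<in> {1..B}"
      then show "norm (b k *\<^sub>R \<phi> k) \<le> \<bar>b k\<bar>"
        using phi[of k] by (simp add: mult_left_le)
    qed
    finally show ?thesis .
  qed
  have qn: "norm q \<le> Bs"
  proof -
    have "norm q \<le> (\<Sum>k=1..B. norm (b k *\<^sub>R u k))" unfolding q_def by (rule norm_sum)
    also have "\<dots> \<le> Bs" unfolding Bs_def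
    proof (rule sum_mono)
      fix k assume k: "k \<in> {1..B}"
      have "norm (u k) \<le> norm (\<phi> k)" unfolding u_def
        using phi k eta t13 eta1 by (intro H_contract) auto
      also have "\<dots> \<le> 1" using phi k by auto
      finally show "norm (b k *\<^sub>R u k) \<le> \<bar>b k\<bar>"
        by (simp add: mult_left_le)
    qed
    finally show ?thesis .
  qed
  have CS: "Bs^2 \<le> real B * s"
  proof -
    have "Bs^2 = (\<Sum>k=1..B. 1 * \<bar>b k\<bar>)^2" by (simp add: Bs_def)
    also have "\<dots> \<le> (\<Sum>k=1..B. 1^2) * (\<Sum>k=1..B. \<bar>b k\<bar>^2)" by (rule Cauchy_Schwarz_ineq_sum)
    also have "\<dots> = real B * s" by (simp add: s_def)
    finally show ?thesis .
  qed
  have F0: "0 \<le> F B" unfolding F_def by (simp add: sum_nonneg)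
  have Fs: "F B \<le> s" unfolding F_def s_def
  proof (rule sum_mono)
    fix k assume "k \<in> {1..B}"
    then have "(norm (\<phi> k))^2 \<le> 1" using phi by (simp add: power_le_one)
    then show "(b k)^2 * (norm (\<phi> k))^2 \<le> (b k)^2" by (intro mult_left_le) auto
  qed
  have sbc: "(\<Sum>k=1..B. b k * cc k) = s - (\<Sum>k=1..B. b k * e k)"
    by (simp add: s_def e_def algebra_simps power2_eq_square sum_subtractf)
  define Dv where "Dv = (norm (H *v x))^2 - (norm x)^2 + 2*\<eta>* s"
  have Deq: "Dv = \<eta>^2 * ((norm (w B))^2 - F B) - 2*\<eta>^2 * R + \<eta>^2 * (norm q)^2"
    unfolding Dv_def nHx sbc sbe using wid[of B] by (simp add: algebra_simps power2_eq_square)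
  have BE: "Bs * (real B * E) = t * Bs^2 / (1-t)"
    using t13 unfolding E_def t_def by (simp add: field_simps power2_eq_square)
  have wq2: "(norm (w B))^2 \<le> Bs^2" "(norm q)^2 \<le> Bs^2"
    using wn qn by (auto intro: power_mono)
  define Q where "Q = Bs^2"
  have Q0: "0 \<le> Q" by (simp add: Q_def)
  have tQ: "t * Q / (1-t) \<le> t * (real B * s) / (1-t)"
    using CS t13 by (simp add: Q_def divide_right_mono mult_left_mono)
  have eta2: "\<eta>^2 * real B = \<eta> * t" by (simp add: t_def power2_eq_square)
  have up: "Dv \<le> 2*\<eta>*(t/(1-2*t))* s"
  proof -
    have "Dv \<le> \<eta>^2 * (Q + 2 * (t * Q / (1-t)) + Q)"
    proof -
      have "- R \<le> t * Q / (1-t)" using Rb BE by (simp add: Q_def)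
      then have "(norm (w B))^2 - F B - 2 * R + (norm q)^2 \<le> Q + 2 * (t * Q / (1-t)) + Q"
        using wq2 F0 unfolding Q_def by linarith
      then have "\<eta>^2 * ((norm (w B))^2 - F B - 2 * R + (norm q)^2) \<le> \<eta>^2 * (Q + 2 * (t * Q / (1-t)) + Q)"
        by (rule mult_left_mono) simp
      moreover have "Dv = \<eta>^2 * ((norm (w B))^2 - F B - 2 * R + (norm q)^2)"
        unfolding Deq by (simp add: algebra_simps)
      ultimately show ?thesis by simp
    qed
    also have "Q + 2 * (t * Q / (1-t)) + Q = 2 * Q / (1-t)"
      using t13 by (simp add: field_simps)
    also have "\<eta>^2 * (2 * Q / (1-t)) \<le> \<eta>^2 * (2 * (real B * s) / (1-t))"
      using CS t13 by (intro mult_left_mono divide_right_mono) (auto simp: Q_def)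
    also have "\<eta>^2 * (2 * (real B * s) / (1-t)) = 2 * \<eta> * (t / (1-t)) * s"
      using eta2 by (simp add: field_simps)
    also have "\<dots> \<le> 2*\<eta>*(t/(1-2*t))* s"
      using t13 eta s0 by (intro mult_right_mono mult_left_mono divide_left_mono) auto
    finally show ?thesis .
  qed
  have lo: "- (2*\<eta>*(t/(1-2*t))* s) \<le> Dv"
  proof -
    have "\<eta>^2 * (- s - 2 * (t * (real B * s) / (1-t))) \<le> Dv"
    proof -
      have "R \<le> t * Q / (1-t)" using Rb BE by (simp add: Q_def)
      then have "R \<le> t * (real B * s) / (1-t)" using tQ by simp
      then have "- s - 2 * (t * (real B * s) / (1-t)) \<le> (norm (w B))^2 - F B - 2 * R + (norm q)^2"
        using Fs zero_le_power2[of "norm (w B)"] zero_le_power2[of "norm q"] by linarith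
      then have "\<eta>^2 * (- s - 2 * (t * (real B * s) / (1-t))) \<le> \<eta>^2 * ((norm (w B))^2 - F B - 2 * R + (norm q)^2)"
        by (rule mult_left_mono) simp
      moreover have "Dv = \<eta>^2 * ((norm (w B))^2 - F B - 2 * R + (norm q)^2)"
        unfolding Deq by (simp add: algebra_simps)
      ultimately show ?thesis by simp
    qed
    moreover have "\<eta>^2 * (- s - 2 * (t * (real B * s) / (1-t)))
        = - (\<eta>^2 * s) - 2 * \<eta> * t * t * s / (1-t)"
      using eta2 by (simp add: field_simps)
    moreover have "\<eta>^2 * s \<le> \<eta> * t * s"
      using eta1 eta s0 by (simp add: power2_eq_square mult_right_mono)
    moreover have "\<eta> * t * s + 2 * \<eta> * t * t * s / (1-t) \<le> 2*\<eta>*(t/(1-2*t))* s"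
    proof -
      have "1 + 2*t/(1-t) \<le> 2/(1-2*t)" using t13
        apply (simp add: field_simps)
        using mult_nonneg_nonneg[of t "t*2"] by linarith
      then have "(\<eta>*t* s) * (1 + 2*t/(1-t)) \<le> (\<eta>*t* s) * (2/(1-2*t))"
        using eta t13 s0 by (intro mult_left_mono) auto
      then show ?thesis using t13 by (simp add: field_simps)
    qed
    ultimately show ?thesis by linarith
  qed
  have "\<bar>Dv\<bar> \<le> 2*\<eta>*(t/(1-2*t))* s" using up lo by linarith
  then show ?thesis by (simp add: Dv_def H_def s_def b_def)
qed


theorem mainTheorem4:
  fixes \<phi> :: "nat \<Rightarrow> real^'d" and \<eta> :: real and B :: nat
  assumes "\<And>i. i \<in> {1..B} \<Longrightarrow> norm (\<phi> i) \<le> 1"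
    and "\<eta> > 0" and "\<eta> * real B < 1/3"
  defines "H \<equiv> mat_prod_upto (\<lambda>i. mat 1 - \<eta> *\<^sub>R outer (\<phi> i) (\<phi> i)) B"
    and "S \<equiv> (\<Sum>i=1..B. outer (\<phi> i) (\<phi> i))"
  shows "loewner_le (mat 1 - (2 * \<eta> * (1 + \<eta> * real B / (1 - 2 * \<eta> * real B))) *\<^sub>R S)
                    (transpose H ** H)
       \<and> loewner_le (transpose H ** H)
                    (mat 1 - (2 * \<eta> * (1 - \<eta> * real B / (1 - 2 * \<eta> * real B))) *\<^sub>R S)"
proof (cases "B = 0")
  case True
  then have "H = mat 1" "S = 0" by (simp_all add: H_def S_def)
  then show ?thesis by (simp add: loewner_le_def)
next
  case False
  then have B1: "B \<ge> 1" by simp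
  have HH: "H = mat_prod_upto (PP \<phi> \<eta>) B"
    unfolding H_def by (simp add: PP_def[abs_def])
  define c where "c = \<eta> * real B / (1 - 2 * (\<eta> * real B))"
  have c_alt: "\<eta> * real B / (1 - 2 * \<eta> * real B) = c" by (simp add: c_def mult.assoc)
  have mb: "\<bar>(norm (H *v x))^2 - (norm x)^2 + 2*\<eta>*(\<Sum>k=1..B. (\<phi> k \<bullet> x)^2)\<bar>
          \<le> 2*\<eta>*c*(\<Sum>k=1..B. (\<phi> k \<bullet> x)^2)" for x
    using main_bound[where \<phi>=\<phi> and \<eta>=\<eta> and B=B and x=x] assms B1 unfolding HH c_def by blast
  have qS: "x \<bullet> (S *v x) = (\<Sum>k=1..B. (\<phi> k \<bullet> x)^2)" for x
    unfolding S_def sum_mv outer_mv by (simp add: inner_sum_right power2_eq_square inner_commute)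
  have k1: "x \<bullet> ((transpose H ** H - (mat 1 - r *\<^sub>R S)) *v x)
      = (norm (H *v x))^2 - (norm x)^2 + r * (x \<bullet> (S *v x))" for x r
    unfolding matrix_vector_mult_diff_rdistrib smult_mv inner_diff_right inner_scaleR_right
      quad_tt matrix_vector_mul_lid
    by (simp add: power2_norm_eq_inner)
  have k2: "x \<bullet> (((mat 1 - r *\<^sub>R S) - transpose H ** H) *v x)
      = (norm x)^2 - r * (x \<bullet> (S *v x)) - (norm (H *v x))^2" for x r
    unfolding matrix_vector_mult_diff_rdistrib smult_mv inner_diff_right inner_scaleR_right
      quad_tt matrix_vector_mul_lid
    by (simp add: power2_norm_eq_inner)
  show ?thesis
    unfolding loewner_le_def c_alt
  proof (intro conjI allI)
    fix x
    define s where "s = (\<Sum>k=1..B. (\<phi> k \<bullet> x)^2)"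
    have e1: "2 * \<eta> * (1 + c) * s = 2*\<eta>* s + 2*\<eta>*c* s" by (simp add: algebra_simps)
    have e2: "2 * \<eta> * (1 - c) * s = 2*\<eta>* s - 2*\<eta>*c* s" by (simp add: algebra_simps)
    have m: "\<bar>(norm (H *v x))^2 - (norm x)^2 + 2*\<eta>* s\<bar> \<le> 2*\<eta>*c* s"
      using mb[of x] by (simp add: s_def)
    show "0 \<le> x \<bullet> ((transpose H ** H - (mat 1 - (2 * \<eta> * (1 + c)) *\<^sub>R S)) *v x)"
      unfolding k1 qS s_def[symmetric] using m e1 by linarith
    show "0 \<le> x \<bullet> ((mat 1 - (2 * \<eta> * (1 - c)) *\<^sub>R S - transpose H ** H) *v x)"
      unfolding k2 qS s_def[symmetric] using m e2 by linarith
  qed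
qed

end
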